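(* Let $G$ be a graph on $n$ vertices, $t\ge 1$ an integer, and let $G'$, $\alpha$ be as in the construction below; let $k=n+t+1$, $\ell=2t+2t^2$, and let $\beta$ be defined by $\beta(v)=\alpha(v)$ for $v\in V_G\cup V_C$ and $\beta(b^i_j)=n+j$ for $i,j\in\{1,\ldots,t\}$. If $G$ has an independent set of size at least $t-1$, then $\mathcal{C}_k(G')$ contains a path from $\alpha$ to $\beta$ of length at most $\ell$.
   Context: Construction: with $V(G)=\{v_1,\ldots,v_n\}$, $V(G')=V_G\cup V_B\cup V_C$, where $V_G=\{g_1,\ldots,g_n\}$ induces a copy of $G$ ($g_ig_j$ an edge iff $v_iv_j\in E(G)$); $V_B=\{b^i_j\mid i,j\in\{1,\ldots,t\}\}$ with $b^i_jb^{i'}_{j'}$ an edge iff $i\ne i'$ and $j\ne j'$; all edges between $V_G$ and $V_B$ are present; $V_C=C_1\cup\cdots\cup C_{n+t+1}$ with the $C_i$ pairwise disjoint independent sets of size $2t+2t^2$ and no edges among vertices of $V_C$; each $g_i$ is adjacent to all of $V_C\setminus(C_i\cup C_{n+t+1})$; each vertex of $V_B$ is adjacent to all of $C_{n+t+1}$; no other edges. $\alpha(g_i)=i$, $\alpha(c)=i$ for $c\in C_i$, $\alpha(b^i_j)=n+i$. A $k$-coloring is a map $V\to\{1,\ldots,k\}$ with adjacent vertices colored differently; $\mathcal{C}_k(G')$ is the graph on the $k$-colorings of $G'$, two adjacent iff they differ on exactly one vertex. *)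

theory Defs
  imports Main
begin

text \<open>Vertices of G': Gv i = g_i, Bv i j = b^i_j, Cv c m = the m-th vertex of C_c (m < 2t+2t^2).\<close>
datatype vert = Gv nat | Bv nat nat | Cv nat nat

definition simple_graph_on :: "nat \<Rightarrow> (nat \<Rightarrow> nat \<Rightarrow> bool) \<Rightarrow> bool" where
  "simple_graph_on n E \<longleftrightarrow>
     (\<forall>i\<in>{1..n}. \<forall>j\<in>{1..n}. E i j \<longleftrightarrow> E j i) \<and> (\<forall>i\<in>{1..n}. \<not> E i i)"

definition independent_set :: "nat \<Rightarrow> (nat \<Rightarrow> nat \<Rightarrow> bool) \<Rightarrow> nat set \<Rightarrow> bool" where
  "independent_set n E S \<longleftrightarrow> S \<subseteq> {1..n} \<and> (\<forall>i\<in>S. \<forall>j\<in>S. \<not> E i j)"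

definition Gp_verts :: "nat \<Rightarrow> nat \<Rightarrow> vert set" where
  "Gp_verts n t =
     {Gv i | i. i \<in> {1..n}} \<union>
     {Bv i j | i j. i \<in> {1..t} \<and> j \<in> {1..t}} \<union>
     {Cv c m | c m. c \<in> {1..n+t+1} \<and> m < 2*t + 2*t^2}"

fun Gp_edge0 :: "nat \<Rightarrow> nat \<Rightarrow> (nat \<Rightarrow> nat \<Rightarrow> bool) \<Rightarrow> vert \<Rightarrow> vert \<Rightarrow> bool" where
  "Gp_edge0 n t E (Gv i) (Gv j) = E i j"
| "Gp_edge0 n t E (Bv i j) (Bv i' j') = (i \<noteq> i' \<and> j \<noteq> j')"
| "Gp_edge0 n t E (Gv i) (Bv _ _) = True"
| "Gp_edge0 n t E (Gv i) (Cv c _) = (c \<noteq> i \<and> c \<noteq> n+t+1)"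
| "Gp_edge0 n t E (Bv _ _) (Cv c _) = (c = n+t+1)"
| "Gp_edge0 n t E _ _ = False"

definition Gp_adj :: "nat \<Rightarrow> nat \<Rightarrow> (nat \<Rightarrow> nat \<Rightarrow> bool) \<Rightarrow> vert \<Rightarrow> vert \<Rightarrow> bool" where
  "Gp_adj n t E u v \<longleftrightarrow>
     u \<in> Gp_verts n t \<and> v \<in> Gp_verts n t \<and> (Gp_edge0 n t E u v \<or> Gp_edge0 n t E v u)"

definition is_coloring :: "nat \<Rightarrow> nat \<Rightarrow> (nat \<Rightarrow> nat \<Rightarrow> bool) \<Rightarrow> nat \<Rightarrow> (vert \<Rightarrow> nat) \<Rightarrow> bool" where
  "is_coloring n t E k f \<longleftrightarrow>
     (\<forall>v\<in>Gp_verts n t. f v \<in> {1..k}) \<and> (\<forall>v. v \<notin> Gp_verts n t \<longrightarrow> f v = 0) \<and>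
     (\<forall>u v. Gp_adj n t E u v \<longrightarrow> f u \<noteq> f v)"

definition recol_adj :: "nat \<Rightarrow> nat \<Rightarrow> (nat \<Rightarrow> nat \<Rightarrow> bool) \<Rightarrow> nat \<Rightarrow> (vert \<Rightarrow> nat) \<Rightarrow> (vert \<Rightarrow> nat) \<Rightarrow> bool" where
  "recol_adj n t E k f g \<longleftrightarrow>
     is_coloring n t E k f \<and> is_coloring n t E k g \<and> card {v \<in> Gp_verts n t. f v \<noteq> g v} = 1"

text \<open>A path in C_k(G') given as its (distinct) vertex sequence; its length is length - 1.\<close>
definition recol_path :: "nat \<Rightarrow> nat \<Rightarrow> (nat \<Rightarrow> nat \<Rightarrow> bool) \<Rightarrow> nat \<Rightarrow> (vert \<Rightarrow> nat) list \<Rightarrow> bool" where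
  "recol_path n t E k fs \<longleftrightarrow> fs \<noteq> [] \<and> distinct fs \<and>
     (\<forall>f\<in>set fs. is_coloring n t E k f) \<and>
     (\<forall>i. Suc i < length fs \<longrightarrow> recol_adj n t E k (fs ! i) (fs ! Suc i))"

definition alpha_col :: "nat \<Rightarrow> nat \<Rightarrow> vert \<Rightarrow> nat" where
  "alpha_col n t v = (if v \<in> Gp_verts n t then
      (case v of Gv i \<Rightarrow> i | Bv i j \<Rightarrow> n + i | Cv c m \<Rightarrow> c) else 0)"

definition beta_col :: "nat \<Rightarrow> nat \<Rightarrow> vert \<Rightarrow> nat" where
  "beta_col n t v = (if v \<in> Gp_verts n t then
      (case v of Gv i \<Rightarrow> i | Bv i j \<Rightarrow> n + j | Cv c m \<Rightarrow> c) else 0)"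

end

theory Submission
  imports Defs
begin

lemma verts_iff[simp]:
  "Gv i \<in> Gp_verts n t \<longleftrightarrow> i \<in> {1..n}"
  "Bv i j \<in> Gp_verts n t \<longleftrightarrow> i \<in> {1..t} \<and> j \<in> {1..t}"
  "Cv c m \<in> Gp_verts n t \<longleftrightarrow> c \<in> {1..n+t+1} \<and> m < 2*t + 2*t^2"
  by (auto simp: Gp_verts_def)

definition colf :: "nat \<Rightarrow> nat \<Rightarrow> nat set \<Rightarrow> (nat \<Rightarrow> nat \<Rightarrow> nat) \<Rightarrow> vert \<Rightarrow> nat" where
  "colf n t gs bf v = (if v \<in> Gp_verts n t then
     (case v of Gv i \<Rightarrow> if i \<in> gs then n+t+1 else i | Bv i j \<Rightarrow> bf i j | Cv c m \<Rightarrow> c) else 0)"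

definition validB :: "nat \<Rightarrow> nat \<Rightarrow> nat set \<Rightarrow> (nat \<Rightarrow> nat \<Rightarrow> nat) \<Rightarrow> bool" where
  "validB n t gs bf \<longleftrightarrow> (\<forall>i\<in>{1..t}. \<forall>j\<in>{1..t}. (n < bf i j \<and> bf i j \<le> n+t) \<or> bf i j \<in> gs) \<and>
     (\<forall>i\<in>{1..t}. \<forall>j\<in>{1..t}. \<forall>i'\<in>{1..t}. \<forall>j'\<in>{1..t}. i \<noteq> i' \<longrightarrow> j \<noteq> j' \<longrightarrow> bf i j \<noteq> bf i' j')"

lemma vB:
  assumes "validB n t gs bf" "gs \<subseteq> {1..n}" "a \<in> {1..t}" "b \<in> {1..t}"
  shows "1 \<le> bf a b \<and> bf a b \<le> n+t \<and> (\<forall>i. i \<le> n \<longrightarrow> i \<notin> gs \<longrightarrow> bf a b \<noteq> i)"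
proof -
  have "(n < bf a b \<and> bf a b \<le> n+t) \<or> bf a b \<in> gs" using assms(1,3,4) unfolding validB_def by blast
  then show ?thesis using assms(2) by auto
qed

lemma vB2:
  assumes "validB n t gs bf" "a \<in> {1..t}" "b \<in> {1..t}" "a' \<in> {1..t}" "b' \<in> {1..t}" "a \<noteq> a'" "b \<noteq> b'"
  shows "bf a b \<noteq> bf a' b'"
  using assms unfolding validB_def by blast

lemma col_proper:
  assumes sg: "simple_graph_on n E" and ind: "independent_set n E gs" and v: "validB n t gs bf"
  shows "is_coloring n t E (n+t+1) (colf n t gs bf)"
proof -
  have gsn: "gs \<subseteq> {1..n}" using ind by (simp add: independent_set_def)
  note V = vB[OF v gsn]
  have A: "\<forall>v\<in>Gp_verts n t. colf n t gs bf v \<in> {1..n+t+1}"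
  proof
    fix v assume vv: "v \<in> Gp_verts n t"
    show "colf n t gs bf v \<in> {1..n+t+1}"
    proof (cases v)
      case (Gv i) then show ?thesis using vv by (simp add: colf_def)
    next
      case (Bv a b)
      then have ab: "a \<in> {1..t}" "b \<in> {1..t}" using vv by auto
      then show ?thesis using Bv V[OF ab] by (simp add: colf_def)
    next
      case (Cv c m) then show ?thesis using vv by (simp add: colf_def)
    qed
  qed
  have B: "colf n t gs bf u \<noteq> colf n t gs bf v" if a: "Gp_adj n t E u v" for u v
  proof -
    have uv: "u \<in> Gp_verts n t" "v \<in> Gp_verts n t" and e: "Gp_edge0 n t E u v \<or> Gp_edge0 n t E v u"
      using a unfolding Gp_adj_def by auto
    show ?thesis
    proof (cases u)
      case (Gv i)
      note u = this
      show ?thesis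
      proof (cases v)
        case (Gv j)
        then have "E i j \<or> E j i" using e u by auto
        moreover have "i \<in> {1..n}" "j \<in> {1..n}" using uv u Gv by auto
        ultimately have "i \<noteq> j" "\<not> (i \<in> gs \<and> j \<in> gs)" using sg ind
          unfolding simple_graph_on_def independent_set_def by blast+
        then show ?thesis using u Gv uv \<open>i \<in> {1..n}\<close> \<open>j \<in> {1..n}\<close> by (auto simp: colf_def)
      next
        case (Bv a b)
        then have ab: "a \<in> {1..t}" "b \<in> {1..t}" using uv by auto
        have "i \<in> {1..n}" using uv u by auto
        then show ?thesis using u Bv uv V[OF ab] by (auto simp: colf_def)
      next
        case (Cv c m)
        then show ?thesis using u uv e by (auto simp: colf_def)
      qed
    next
      case (Bv a b)
      note u = this
      have ab: "a \<in> {1..t}" "b \<in> {1..t}" using uv u by auto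
      show ?thesis
      proof (cases v)
        case (Gv i)
        have "i \<in> {1..n}" using uv Gv by auto
        then show ?thesis using u Gv uv V[OF ab] by (auto simp: colf_def)
      next
        case (Bv a' b')
        have ab': "a' \<in> {1..t}" "b' \<in> {1..t}" using uv Bv by auto
        have "a \<noteq> a'" "b \<noteq> b'" using e u Bv by auto
        then show ?thesis using vB2[OF v ab ab'] u Bv uv by (simp add: colf_def)
      next
        case (Cv c m)
        then show ?thesis using u uv e V[OF ab] by (auto simp: colf_def)
      qed
    next
      case (Cv c m)
      note u = this
      show ?thesis
      proof (cases v)
        case (Gv i)
        then show ?thesis using u uv e by (auto simp: colf_def)
      next
        case (Bv a b)
        have ab: "a \<in> {1..t}" "b \<in> {1..t}" using uv Bv by auto
        then show ?thesis using u Bv uv e V[OF ab] by (auto simp: colf_def)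
      next
        case (Cv c' m')
        then show ?thesis using u e by auto
      qed
    qed
  qed
  show ?thesis unfolding is_coloring_def using A B by (auto simp: colf_def)
qed

definition stp where
  "stp n t E k f g \<longleftrightarrow> is_coloring n t E k f \<and> is_coloring n t E k g \<and>
     card {v \<in> Gp_verts n t. f v \<noteq> g v} \<le> 1"

lemma stp_sym: "stp n t E k f g \<Longrightarrow> stp n t E k g f"
proof -
  assume a: "stp n t E k f g"
  have "{v \<in> Gp_verts n t. g v \<noteq> f v} = {v \<in> Gp_verts n t. f v \<noteq> g v}" by auto
  then show ?thesis using a unfolding stp_def by simp
qed

lemma stp_one:
  assumes "is_coloring n t E k f" "is_coloring n t E k g" "\<forall>u. u \<noteq> w \<longrightarrow> f u = g u"
  shows "stp n t E k f g"
proof -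
  have "{v \<in> Gp_verts n t. f v \<noteq> g v} \<subseteq> {w}" using assms(3) by auto
  then have "card {v \<in> Gp_verts n t. f v \<noteq> g v} \<le> card {w}" by (intro card_mono) auto
  then show ?thesis using assms unfolding stp_def by simp
qed

inductive reach :: "nat \<Rightarrow> nat \<Rightarrow> (nat \<Rightarrow> nat \<Rightarrow> bool) \<Rightarrow> nat \<Rightarrow> nat \<Rightarrow> (vert \<Rightarrow> nat) \<Rightarrow> (vert \<Rightarrow> nat) \<Rightarrow> bool"
  for n t E k where
  r0: "is_coloring n t E k f \<Longrightarrow> reach n t E k 0 f f"
| rs: "reach n t E k N f g \<Longrightarrow> stp n t E k g h \<Longrightarrow> reach n t E k (Suc N) f h"

lemma reach_trans: "reach n t E k N2 g h \<Longrightarrow> reach n t E k N1 f g \<Longrightarrow> reach n t E k (N1+N2) f h"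
  by (induction rule: reach.induct) (auto intro: reach.rs)

lemma reach_col: "reach n t E k N f g \<Longrightarrow> is_coloring n t E k f"
  by (induction rule: reach.induct) auto

lemma reach_cons: "reach n t E k N g h \<Longrightarrow> stp n t E k f g \<Longrightarrow> reach n t E k (Suc N) f h"
proof (induction rule: reach.induct)
  case (r0 f')
  then show ?case using reach.r0 reach.rs stp_def by metis
next
  case (rs N f' g h)
  then show ?case using reach.rs by auto
qed

lemma reach_sym: "reach n t E k N f g \<Longrightarrow> reach n t E k N g f"
proof (induction rule: reach.induct)
  case (r0 f) then show ?case by (rule reach.r0)
next
  case (rs N f g h)
  then show ?case using reach_cons[OF rs(3) stp_sym[OF rs(2)]] by simp
qed

lemma recol_adj_of_stp:
  assumes "stp n t E k g h" "g \<noteq> h"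
  shows "recol_adj n t E k g h"
proof -
  obtain v where v: "g v \<noteq> h v" using assms(2) by auto
  have "v \<in> Gp_verts n t" using v assms(1) unfolding stp_def is_coloring_def by metis
  then have "{v \<in> Gp_verts n t. g v \<noteq> h v} \<noteq> {}" using v by auto
  moreover have "finite {v \<in> Gp_verts n t. g v \<noteq> h v}"
  proof -
    have "Gp_verts n t = Gv ` {1..n} \<union> (\<lambda>(i,j). Bv i j) ` ({1..t}\<times>{1..t}) \<union>
       (\<lambda>(c,m). Cv c m) ` ({1..n+t+1} \<times> {..<2*t+2*t^2})"
      unfolding Gp_verts_def by auto
    then have "finite (Gp_verts n t)" by simp
    then show ?thesis by simp
  qed
  ultimately have "card {v \<in> Gp_verts n t. g v \<noteq> h v} \<ge> 1"
    by (meson card_0_eq less_one not_le)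
  then show ?thesis using assms(1) unfolding stp_def recol_adj_def by simp
qed

lemma reach_path:
  "reach n t E k N f g \<Longrightarrow> \<exists>fs. recol_path n t E k fs \<and> hd fs = f \<and> last fs = g \<and> length fs \<le> Suc N"
proof (induction rule: reach.induct)
  case (r0 f)
  then show ?case by (intro exI[of _ "[f]"]) (auto simp: recol_path_def)
next
  case (rs N f g h)
  then obtain fs where fs: "recol_path n t E k fs" "hd fs = f" "last fs = g" "length fs \<le> Suc N" by blast
  have ne: "fs \<noteq> []" using fs(1) by (simp add: recol_path_def)
  show ?case
  proof (cases "h \<in> set fs")
    case True
    then obtain i where i: "i < length fs" "fs ! i = h" by (meson in_set_conv_nth)
    let ?fs = "take (Suc i) fs"
    have "recol_path n t E k ?fs" using fs(1) i(1) unfolding recol_path_def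
      by (auto dest: in_set_takeD)
    moreover have "hd ?fs = f" using fs(2) ne by simp
    moreover have "last ?fs = h"
    proof -
      have "?fs \<noteq> []" using ne by simp
      then have "last ?fs = ?fs ! (length ?fs - 1)" by (rule last_conv_nth)
      also have "length ?fs - 1 = i" using i(1) by simp
      then have "?fs ! (length ?fs - 1) = fs ! i" by simp
      finally have "last ?fs = fs ! i" .
      then show ?thesis using i(2) by simp
    qed
    moreover have "length ?fs \<le> Suc (Suc N)" using fs(4) by simp
    ultimately show ?thesis by blast
  next
    case False
    let ?fs = "fs @ [h]"
    have gh: "g \<noteq> h" using False fs(3) ne by auto
    have adj: "recol_adj n t E k g h" using recol_adj_of_stp[OF rs(2) gh] .
    have "recol_path n t E k ?fs"
      unfolding recol_path_def
    proof (intro conjI allI impI)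
      show "?fs \<noteq> []" by simp
      show "distinct ?fs" using fs(1) False by (simp add: recol_path_def)
      show "\<forall>x\<in>set ?fs. is_coloring n t E k x" using fs(1) rs(2)
        by (auto simp: recol_path_def stp_def)
      fix j assume j: "Suc j < length ?fs"
      show "recol_adj n t E k (?fs ! j) (?fs ! Suc j)"
      proof (cases "Suc j < length fs")
        case True
        then show ?thesis using fs(1) by (simp add: recol_path_def nth_append)
      next
        case False
        then have "j = length fs - 1" using j by simp
        then have "?fs ! j = g" "?fs ! Suc j = h" using fs(3) ne
          by (auto simp: nth_append last_conv_nth)
        then show ?thesis using adj by simp
      qed
    qed
    moreover have "hd ?fs = f" using fs(2) ne by simp
    moreover have "last ?fs = h" by simp
    moreover have "length ?fs \<le> Suc (Suc N)" using fs(4) by simp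
    ultimately show ?thesis by blast
  qed
qed

lemma ind_sub: "independent_set n E T \<Longrightarrow> S \<subseteq> T \<Longrightarrow> independent_set n E S"
  unfolding independent_set_def by blast

lemma phaseG:
  assumes sg: "simple_graph_on n E" and indT: "independent_set n E T"
    and vb: "\<forall>gs. validB n t gs bf"
    and fin: "finite Y" and sub: "Y \<subseteq> T"
  shows "reach n t E (n+t+1) (card Y) (colf n t {} bf) (colf n t Y bf)"
  using fin sub
proof (induction Y rule: finite_induct)
  case empty
  have "independent_set n E {}" using indT by (simp add: independent_set_def)
  then show ?case using col_proper[OF sg _ vb[rule_format]] reach.r0 by simp
next
  case (insert x F)
  have IH: "reach n t E (n+t+1) (card F) (colf n t {} bf) (colf n t F bf)" using insert by auto
  have i1: "independent_set n E F" "independent_set n E (insert x F)"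
    using ind_sub[OF indT] insert by auto
  have "stp n t E (n+t+1) (colf n t F bf) (colf n t (insert x F) bf)"
    by (rule stp_one[where w="Gv x"], rule col_proper[OF sg i1(1) vb[rule_format]],
        rule col_proper[OF sg i1(2) vb[rule_format]]) (auto simp: colf_def split: vert.split)
  then show ?case using reach.rs[OF IH] insert by simp
qed

definition upd :: "(nat \<times> nat) set \<Rightarrow> (nat \<Rightarrow> nat \<Rightarrow> nat) \<Rightarrow> (nat \<Rightarrow> nat \<Rightarrow> nat) \<Rightarrow> nat \<Rightarrow> nat \<Rightarrow> nat" where
  "upd Y h b0 = (\<lambda>i j. if (i,j) \<in> Y then h i j else b0 i j)"

lemma phaseB:
  assumes sg: "simple_graph_on n E" and ind: "independent_set n E gs"
    and fin: "finite Y" and vb: "\<forall>Y'\<subseteq>Y. validB n t gs (upd Y' h b0)"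
  shows "reach n t E (n+t+1) (card Y) (colf n t gs b0) (colf n t gs (upd Y h b0))"
  using fin vb
proof (induction Y rule: finite_induct)
  case empty
  have "upd {} h b0 = b0" by (simp add: upd_def)
  then show ?case using col_proper[OF sg ind] empty reach.r0 by force
next
  case (insert x F)
  have IH: "reach n t E (n+t+1) (card F) (colf n t gs b0) (colf n t gs (upd F h b0))"
    using insert by auto
  have v1: "validB n t gs (upd F h b0)" "validB n t gs (upd (insert x F) h b0)"
    using insert.prems by auto
  obtain a b where x: "x = (a,b)" by (cases x)
  have "stp n t E (n+t+1) (colf n t gs (upd F h b0)) (colf n t gs (upd (insert x F) h b0))"
    by (rule stp_one[where w="Bv a b"], rule col_proper[OF sg ind v1(1)],
        rule col_proper[OF sg ind v1(2)]) (auto simp: colf_def upd_def x split: vert.split)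
  then show ?case using reach.rs[OF IH] insert by simp
qed

lemma colf_cong:
  "(\<forall>i\<in>{1..t}. \<forall>j\<in>{1..t}. bf i j = bf' i j) \<Longrightarrow> colf n t gs bf = colf n t gs bf'"
  by (rule ext) (auto simp: colf_def split: vert.split)

lemma alpha_eq: "alpha_col n t = colf n t {} (\<lambda>i j. n+i)"
  by (rule ext) (auto simp: colf_def alpha_col_def split: vert.split)

lemma beta_eq: "beta_col n t = colf n t {} (\<lambda>i j. n+j)"
  by (rule ext) (auto simp: colf_def beta_col_def split: vert.split)

theorem mainTheorem3:
  fixes n t :: nat and E :: "nat \<Rightarrow> nat \<Rightarrow> bool"
  assumes "simple_graph_on n E"
    and "t \<ge> 1"
    and "\<exists>S. independent_set n E S \<and> card S \<ge> t - 1"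
  shows "\<exists>fs. recol_path n t E (n + t + 1) fs \<and>
           hd fs = alpha_col n t \<and> last fs = beta_col n t \<and>
           length fs - 1 \<le> 2*t + 2*t^2"
proof -
  note sg = assms(1)
  obtain S where S: "independent_set n E S" "card S \<ge> t - 1" using assms(3) by blast
  obtain T where T: "T \<subseteq> S" "card T = t - 1" "finite T"
    using obtain_subset_with_card_n[OF S(2)] by metis
  have indT: "independent_set n E T" using ind_sub[OF S(1) T(1)] .
  have Tn: "T \<subseteq> {1..n}" using indT by (simp add: independent_set_def)
  obtain \<sigma> where bij: "bij_betw \<sigma> {1..t-1} T" using ex_bij_betw_nat_finite_1[OF T(3)] T(2) by auto
  have sT: "\<And>i. i \<in> {1..t-1} \<Longrightarrow> \<sigma> i \<in> T" using bij by (auto simp: bij_betw_def)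
  have sn: "\<And>i. i \<in> {1..t-1} \<Longrightarrow> 1 \<le> \<sigma> i \<and> \<sigma> i \<le> n" using sT Tn by force
  have sinj: "\<And>i i'. i \<in> {1..t-1} \<Longrightarrow> i' \<in> {1..t-1} \<Longrightarrow> \<sigma> i = \<sigma> i' \<Longrightarrow> i = i'"
    using bij by (auto simp: bij_betw_def inj_on_def)
  define row where "row = (\<lambda>(i::nat) (j::nat). n+i)"
  define colm where "colm = (\<lambda>(i::nat) (j::nat). n+j)"
  define R2 where "R2 = {p \<in> {1..t-1}\<times>{1..t}. fst p \<noteq> snd p}"
  define R3 where "R3 = {p \<in> {1..t}\<times>{1..t-1}. fst p \<noteq> snd p}"
  define R4 where "R4 = {1..t-1} \<times> {t}"
  define b2 where "b2 = upd R2 (\<lambda>i j. \<sigma> i) row"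
  define b3 where "b3 = upd R3 (\<lambda>i j. n+j) b2"
  define b4 where "b4 = upd R4 (\<lambda>i j. n+t) b3"
  have V1: "\<forall>gs. validB n t gs row" by (auto simp: validB_def row_def)
  have V5: "\<forall>gs. validB n t gs colm" by (auto simp: validB_def colm_def)
  have V2: "\<forall>Y'\<subseteq>R2. validB n t T (upd Y' (\<lambda>i j. \<sigma> i) row)"
  proof (intro allI impI)
    fix Y' assume Y': "Y' \<subseteq> R2"
    have mem: "\<And>i j. (i,j) \<in> Y' \<Longrightarrow> i \<in> {1..t-1}" using Y' unfolding R2_def by auto
    show "validB n t T (upd Y' (\<lambda>i j. \<sigma> i) row)"
      unfolding validB_def upd_def row_def
    proof (intro conjI ballI impI)
      fix i j assume "i \<in> {1..t}" "j \<in> {1..t}"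
      then show "n < (if (i,j) \<in> Y' then \<sigma> i else n+i) \<and> (if (i,j) \<in> Y' then \<sigma> i else n+i) \<le> n+t \<or>
        (if (i,j) \<in> Y' then \<sigma> i else n+i) \<in> T" using sT mem by auto
    next
      fix i j i' j' assume r: "i \<in> {1..t}" "j \<in> {1..t}" "i' \<in> {1..t}" "j' \<in> {1..t}" "i \<noteq> i'" "j \<noteq> j'"
      show "(if (i,j) \<in> Y' then \<sigma> i else n+i) \<noteq> (if (i',j') \<in> Y' then \<sigma> i' else n+i')"
      proof -
        have A: "(i,j) \<in> Y' \<Longrightarrow> \<sigma> i \<le> n" using sn mem by blast
        have B: "(i',j') \<in> Y' \<Longrightarrow> \<sigma> i' \<le> n" using sn mem by blast
        have C: "(i,j) \<in> Y' \<Longrightarrow> (i',j') \<in> Y' \<Longrightarrow> \<sigma> i \<noteq> \<sigma> i'" using sinj mem r(5) by blast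
        show ?thesis using A B C r by auto
      qed
    qed
  qed
  have V3: "\<forall>Y'\<subseteq>R3. validB n t T (upd Y' (\<lambda>i j. n+j) b2)"
  proof (intro allI impI)
    fix Y' assume Y': "Y' \<subseteq> R3"
    have mem: "\<And>i j. (i,j) \<in> Y' \<Longrightarrow> j \<in> {1..t-1} \<and> i \<noteq> j" using Y' unfolding R3_def by auto
    have mem2: "\<And>i j. (i,j) \<in> R2 \<Longrightarrow> i \<in> {1..t-1}" unfolding R2_def by auto
    have nm2: "\<And>i j. i \<in> {1..t} \<Longrightarrow> j \<in> {1..t} \<Longrightarrow> (i,j) \<notin> R2 \<Longrightarrow> i = t \<or> i = j" unfolding R2_def by auto
    have vb2: "validB n t T b2" using V2 unfolding b2_def by blast
    show "validB n t T (upd Y' (\<lambda>i j. n+j) b2)"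
      unfolding validB_def
    proof (intro conjI ballI impI)
      fix i j assume ij: "i \<in> {1..t}" "j \<in> {1..t}"
      show "n < upd Y' (\<lambda>i j. n+j) b2 i j \<and> upd Y' (\<lambda>i j. n+j) b2 i j \<le> n+t \<or> upd Y' (\<lambda>i j. n+j) b2 i j \<in> T"
      proof (cases "(i,j) \<in> Y'")
        case True then show ?thesis using ij by (simp add: upd_def)
      next
        case False then show ?thesis using vb2 ij unfolding validB_def upd_def by auto
      qed
    next
      fix i j i' j' assume r: "i \<in> {1..t}" "j \<in> {1..t}" "i' \<in> {1..t}" "j' \<in> {1..t}" "i \<noteq> i'" "j \<noteq> j'"
      have b2v: "\<And>a b. a \<in> {1..t} \<Longrightarrow> b \<in> {1..t} \<Longrightarrow> b2 a b = (if (a,b) \<in> R2 then \<sigma> a else n+a)"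
        unfolding b2_def upd_def row_def by simp
      have key: "n + j \<noteq> b2 i' j'" if "(i,j) \<in> Y'" "i' \<in> {1..t}" "j' \<in> {1..t}" "j \<noteq> j'" for i j i' j'
      proof (cases "(i',j') \<in> R2")
        case True then show ?thesis using b2v[OF that(2,3)] sn[OF mem2[OF True]] mem[OF that(1)] by auto
      next
        case False
        then have "i' = t \<or> i' = j'" using nm2 that by blast
        then show ?thesis using b2v[OF that(2,3)] False mem[OF that(1)] that by auto
      qed
      show "upd Y' (\<lambda>i j. n+j) b2 i j \<noteq> upd Y' (\<lambda>i j. n+j) b2 i' j'"
      proof (cases "(i,j) \<in> Y'"; cases "(i',j') \<in> Y'")
        assume "(i,j) \<in> Y'" "(i',j') \<in> Y'" then show ?thesis using r by (simp add: upd_def)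
      next
        assume a: "(i,j) \<in> Y'" "(i',j') \<notin> Y'" then show ?thesis using key[OF a(1) r(3,4,6)] by (simp add: upd_def)
      next
        assume a: "(i,j) \<notin> Y'" "(i',j') \<in> Y'" then show ?thesis using key[OF a(2) r(1,2)] r(6) by (auto simp: upd_def)
      next
        assume a: "(i,j) \<notin> Y'" "(i',j') \<notin> Y'" then show ?thesis using vB2[OF vb2 r] by (simp add: upd_def)
      qed
    qed
  qed
  have V4: "\<forall>Y'\<subseteq>R4. validB n t T (upd Y' (\<lambda>i j. n+t) b3)"
  proof (intro allI impI)
    fix Y' assume Y': "Y' \<subseteq> R4"
    have mem: "\<And>i j. (i,j) \<in> Y' \<Longrightarrow> i \<in> {1..t-1} \<and> j = t" using Y' unfolding R4_def by auto
    have b3v: "\<And>a b. a \<in> {1..t} \<Longrightarrow> b \<in> {1..t} \<Longrightarrow> b \<noteq> t \<Longrightarrow> b3 a b = n + b"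
      unfolding b3_def b2_def upd_def row_def R3_def R2_def by auto
    have vb3: "validB n t T b3" using V3 unfolding b3_def by blast
    show "validB n t T (upd Y' (\<lambda>i j. n+t) b3)"
      unfolding validB_def
    proof (intro conjI ballI impI)
      fix i j assume ij: "i \<in> {1..t}" "j \<in> {1..t}"
      show "n < upd Y' (\<lambda>i j. n+t) b3 i j \<and> upd Y' (\<lambda>i j. n+t) b3 i j \<le> n+t \<or> upd Y' (\<lambda>i j. n+t) b3 i j \<in> T"
      proof (cases "(i,j) \<in> Y'")
        case True then show ?thesis using ij by (simp add: upd_def)
      next
        case False then show ?thesis using vb3 ij unfolding validB_def upd_def by auto
      qed
    next
      fix i j i' j' assume r: "i \<in> {1..t}" "j \<in> {1..t}" "i' \<in> {1..t}" "j' \<in> {1..t}" "i \<noteq> i'" "j \<noteq> j'"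
      show "upd Y' (\<lambda>i j. n+t) b3 i j \<noteq> upd Y' (\<lambda>i j. n+t) b3 i' j'"
      proof (cases "(i,j) \<in> Y'"; cases "(i',j') \<in> Y'")
        assume a: "(i,j) \<in> Y'" "(i',j') \<in> Y'" then show ?thesis using r mem[OF a(1)] mem[OF a(2)] by simp
      next
        assume a: "(i,j) \<in> Y'" "(i',j') \<notin> Y'" then show ?thesis using mem[OF a(1)] r b3v[OF r(3,4)] by (auto simp: upd_def)
      next
        assume a: "(i,j) \<notin> Y'" "(i',j') \<in> Y'" then show ?thesis using mem[OF a(2)] r b3v[OF r(1,2)] by (auto simp: upd_def)
      next
        assume a: "(i,j) \<notin> Y'" "(i',j') \<notin> Y'" then show ?thesis using vB2[OF vb3 r] by (simp add: upd_def)
      qed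
    qed
  qed
  have fin: "finite R2" "finite R3" "finite R4" unfolding R2_def R3_def R4_def by auto
  have P1: "reach n t E (n+t+1) (card T) (colf n t {} row) (colf n t T row)"
    by (rule phaseG[OF sg indT V1 T(3)]) simp
  have P2: "reach n t E (n+t+1) (card R2) (colf n t T row) (colf n t T b2)"
    unfolding b2_def by (rule phaseB[OF sg indT fin(1) V2])
  have P3: "reach n t E (n+t+1) (card R3) (colf n t T b2) (colf n t T b3)"
    unfolding b3_def by (rule phaseB[OF sg indT fin(2) V3])
  have P4: "reach n t E (n+t+1) (card R4) (colf n t T b3) (colf n t T b4)"
    unfolding b4_def by (rule phaseB[OF sg indT fin(3) V4])
  have e4: "colf n t T b4 = colf n t T colm"
  proof (rule colf_cong, intro ballI)
    fix i j assume ij: "i \<in> {1..t}" "j \<in> {1..t}"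
    show "b4 i j = colm i j"
    proof (cases "j = t")
      case True
      show ?thesis
      proof (cases "i = t")
        case True
        have "(i,j) \<notin> R4" "(i,j) \<notin> R3" "(i,j) \<notin> R2" using True \<open>j = t\<close> assms(2)
          unfolding R4_def R3_def R2_def by auto
        then show ?thesis unfolding b4_def b3_def b2_def upd_def row_def colm_def using True \<open>j = t\<close> by simp
      next
        case False
        then have "(i,j) \<in> R4" using ij \<open>j = t\<close> unfolding R4_def by auto
        then show ?thesis unfolding b4_def upd_def colm_def using \<open>j = t\<close> by simp
      qed
    next
      case False
      then have n4: "(i,j) \<notin> R4" unfolding R4_def by auto
      show ?thesis
      proof (cases "i = j")
        case True
        have "(i,j) \<notin> R3" "(i,j) \<notin> R2" using True unfolding R3_def R2_def by auto
        then show ?thesis unfolding b4_def b3_def b2_def upd_def row_def colm_def using True n4 by simp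
      next
        case ne: False
        then have "(i,j) \<in> R3" using ij False unfolding R3_def by auto
        then show ?thesis unfolding b4_def b3_def upd_def colm_def using n4 by simp
      qed
    qed
  qed
  have P5: "reach n t E (n+t+1) (card T) (colf n t T colm) (colf n t {} colm)"
    by (rule reach_sym, rule phaseG[OF sg indT V5 T(3)]) simp
  have P: "reach n t E (n+t+1) (card T + card R2 + card R3 + card R4 + card T)
     (alpha_col n t) (beta_col n t)"
    using reach_trans[OF P5 reach_trans[OF P4[unfolded e4] reach_trans[OF P3 reach_trans[OF P2 P1]]]]
    unfolding alpha_eq beta_eq row_def colm_def by simp
  have c2: "card R2 \<le> (t-1)*t"
  proof -
    have "card R2 \<le> card ({1..t-1}\<times>{1..t})" unfolding R2_def by (rule card_mono) auto
    then show ?thesis by (simp add: card_cartesian_product)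
  qed
  have c3: "card R3 \<le> t*(t-1)"
  proof -
    have "card R3 \<le> card ({1..t}\<times>{1..t-1})" unfolding R3_def by (rule card_mono) auto
    then show ?thesis by (simp add: card_cartesian_product)
  qed
  have c4: "card R4 = t-1" unfolding R4_def by (simp add: card_cartesian_product)
  have arith: "(t-1) + (t-1)*t + t*(t-1) + (t-1) + (t-1) \<le> 2*t + 2*t^2"
  proof -
    obtain s where "t = Suc s" using assms(2) by (cases t) auto
    then show ?thesis by (simp add: power2_eq_square algebra_simps)
  qed
  obtain fs where fs: "recol_path n t E (n+t+1) fs" "hd fs = alpha_col n t" "last fs = beta_col n t"
     "length fs \<le> Suc (card T + card R2 + card R3 + card R4 + card T)"
    using reach_path[OF P] by blast
  have "length fs - 1 \<le> 2*t + 2*t^2" using fs(4) T(2) c2 c3 c4 arith by linarith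
  then show ?thesis using fs by blast
qed

end
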